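(* Let $p$ be an integer with $p>2$ and let $G$ be a graph with at least one vertex. Then $\mathrm{id}^{\leq p}(G) \leq \frac{1}{p-1}|E(G)| + \frac{p-2}{p-1}(|V(G)|-1)$.
   Context: All graphs are finite and simple. For an oriented graph $D$ and a set $X\subseteq V(D)$, the inversion of $X$ reverses the orientation of every arc with both endvertices in $X$. For an integer $p\ge 2$, a $(\leq p)$-inversion is the inversion of a set of at most $p$ vertices. For a graph $G$, $\mathrm{id}^{\leq p}(G)$ (the $(\leq p)$-inversion diameter) is the maximum, over all ordered pairs $(\vec G_1,\vec G_2)$ of orientations of $G$ (on the same labelled vertex set), of the minimum number of $(\leq p)$-inversions whose successive application transforms $\vec G_1$ into $\vec G_2$. *)

theory Defs
  imports Complex_Main
begin

definition simple_graph :: "'a set \<Rightarrow> 'a set set \<Rightarrow> bool" where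
  "simple_graph V E \<longleftrightarrow> finite V \<and>
     (\<forall>e\<in>E. \<exists>u v. e = {u, v} \<and> u \<noteq> v \<and> u \<in> V \<and> v \<in> V)"

definition orientation :: "'a set \<Rightarrow> 'a set set \<Rightarrow> ('a \<times> 'a) set \<Rightarrow> bool" where
  "orientation V E D \<longleftrightarrow>
     (\<forall>(u, v)\<in>D. {u, v} \<in> E) \<and>
     (\<forall>u v. {u, v} \<in> E \<and> u \<noteq> v \<longrightarrow> ((u, v) \<in> D \<longleftrightarrow> (v, u) \<notin> D))"

definition invert :: "('a \<times> 'a) set \<Rightarrow> 'a set \<Rightarrow> ('a \<times> 'a) set" where
  "invert D X = {(u, v). (u, v) \<in> D \<and> \<not> (u \<in> X \<and> v \<in> X)}
              \<union> {(v, u) | u v. (u, v) \<in> D \<and> u \<in> X \<and> v \<in> X}"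

definition le_p_inversion_set :: "nat \<Rightarrow> 'a set \<Rightarrow> 'a set \<Rightarrow> bool" where
  "le_p_inversion_set p V X \<longleftrightarrow> X \<subseteq> V \<and> card X \<le> p"

definition inv_dist :: "nat \<Rightarrow> 'a set \<Rightarrow> ('a \<times> 'a) set \<Rightarrow> ('a \<times> 'a) set \<Rightarrow> nat" where
  "inv_dist p V D1 D2 = (LEAST k. \<exists>Xs. length Xs = k \<and>
      (\<forall>X\<in>set Xs. le_p_inversion_set p V X) \<and> foldl invert D1 Xs = D2)"

definition inv_diam :: "nat \<Rightarrow> 'a set \<Rightarrow> 'a set set \<Rightarrow> nat" where
  "inv_diam p V E = Max {inv_dist p V D1 D2 | D1 D2. orientation V E D1 \<and> orientation V E D2}"

end

theory Submission imports Defs begin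

definition cnt :: "'a set \<Rightarrow> 'a set list \<Rightarrow> nat" where
  "cnt e Xs = length (filter (\<lambda>X. e \<subseteq> X) Xs)"

lemma invert_mem: "(a, b) \<in> invert D X \<longleftrightarrow> (if a \<in> X \<and> b \<in> X then (b, a) \<in> D else (a, b) \<in> D)"
  unfolding invert_def by auto

lemma foldl_invert_mem:
  "(a, b) \<in> foldl invert D Xs \<longleftrightarrow> (if even (cnt {a,b} Xs) then (a, b) \<in> D else (b, a) \<in> D)"
proof (induction Xs arbitrary: D)
  case Nil then show ?case by (simp add: cnt_def)
next
  case (Cons X Xs)
  show ?case using Cons[of "invert D X"] by (auto simp: cnt_def invert_mem)
qed

lemma partition_groups:
  assumes "finite B" "1 \<le> q"
  shows "\<exists>gs. (\<forall>g\<in>set gs. g \<subseteq> B \<and> card g \<le> q) \<and>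
     (\<forall>u. length (filter (\<lambda>g. u \<in> g) gs) = (if u \<in> B then 1 else 0)) \<and>
     q * length gs \<le> card B + q - 1"
  using assms
proof (induction "card B" arbitrary: B rule: less_induct)
  case less
  show ?case
  proof (cases "B = {}")
    case True then show ?thesis by (intro exI[of _ "[]"]) auto
  next
    case ne: False
    show ?thesis
    proof (cases "card B \<le> q")
      case True
      have "card B \<ge> 1" using ne less.prems by (simp add: Suc_leI card_gt_0_iff)
      then show ?thesis using True by (intro exI[of _ "[B]"]) auto
    next
      case False
      then obtain S where S: "S \<subseteq> B" "card S = q" "finite S"
        by (metis nat_le_linear obtain_subset_with_card_n)
      have cB: "card (B - S) = card B - q" using S less.prems by (simp add: card_Diff_subset)
      have "card (B - S) < card B" using cB False less.prems by linarith
      then obtain gs where gs: "\<forall>g\<in>set gs. g \<subseteq> B - S \<and> card g \<le> q"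
        "\<forall>u. length (filter (\<lambda>g. u \<in> g) gs) = (if u \<in> B - S then 1 else 0)"
        "q * length gs \<le> card (B - S) + q - 1"
        using less.hyps[of "B - S"] less.prems by auto
      show ?thesis
      proof (intro exI[of _ "S # gs"] conjI allI ballI)
        fix u show "length (filter (\<lambda>g. u \<in> g) (S # gs)) = (if u \<in> B then 1 else 0)"
          using gs(2)[rule_format, of u] S(1) by auto
      next
        show "q * length (S # gs) \<le> card B + q - 1" using gs(3) cB False by simp
      qed (use gs S in auto)
    qed
  qed
qed

lemma core:
  assumes "finite W" "W \<noteq> {}" "2 \<le> p" and E: "\<forall>e\<in>E. \<exists>u v. e = {u, v} \<and> u \<noteq> v"
  shows "\<forall>T. \<exists>Xs. (\<forall>X\<in>set Xs. X \<subseteq> W \<and> card X \<le> p) \<and>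
     (\<forall>e\<in>E. e \<subseteq> W \<longrightarrow> (odd (cnt e Xs) \<longleftrightarrow> T e)) \<and>
     (p - 1) * length Xs \<le> card {e\<in>E. e \<subseteq> W} + (p - 2) * (card W - 1)"
  using assms(1,2)
proof (induction W rule: finite_ne_induct)
  case (singleton x)
  have "\<forall>e\<in>E. \<not> e \<subseteq> {x}"
  proof (intro ballI notI)
    fix e assume a: "e \<in> E" "e \<subseteq> {x}"
    then obtain u v where "e = {u, v}" "u \<noteq> v" using E by blast
    then show False using a(2) by simp
  qed
  then show ?case by (intro allI exI[of _ "[]"]) auto
next
  case (insert x F)
  show ?case
  proof
    fix T
    define B where "B = {u\<in>F. {x, u} \<in> E \<and> T {x, u}}"
    have finB: "finite B" using insert.hyps(1) B_def by simp
    have "1 \<le> p - 1" using assms(3) by simp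
    obtain gs where gsall: "(\<forall>g\<in>set gs. g \<subseteq> B \<and> card g \<le> p - 1) \<and>
        (\<forall>u. length (filter (\<lambda>g. u \<in> g) gs) = (if u \<in> B then 1 else 0)) \<and>
        (p - 1) * length gs \<le> card B + (p - 1) - 1"
      using partition_groups[OF finB \<open>1 \<le> p - 1\<close>] by (elim exE) 
    note gs = gsall[THEN conjunct1] gsall[THEN conjunct2, THEN conjunct1] gsall[THEN conjunct2, THEN conjunct2]
    define Ys where "Ys = map (insert x) gs"
    define T' where "T' e = (T e \<noteq> odd (cnt e Ys))" for e
    obtain Zs where Zsall: "(\<forall>X\<in>set Zs. X \<subseteq> F \<and> card X \<le> p) \<and>
       (\<forall>e\<in>E. e \<subseteq> F \<longrightarrow> (odd (cnt e Zs) \<longleftrightarrow> T' e)) \<and>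
       (p - 1) * length Zs \<le> card {e\<in>E. e \<subseteq> F} + (p - 2) * (card F - 1)"
      using spec[OF insert.IH, of T'] by (elim exE)
    note Zs = Zsall[THEN conjunct1] Zsall[THEN conjunct2, THEN conjunct1] Zsall[THEN conjunct2, THEN conjunct2]
    have cntapp: "cnt e (Ys @ Zs) = cnt e Ys + cnt e Zs" for e by (simp add: cnt_def)
    have cntY: "cnt {x, w} Ys = (if w \<in> B then 1 else 0)" if "w \<in> F" for w
    proof -
      have wx: "w \<noteq> x" using that insert.hyps by auto
      have "cnt {x, w} Ys = length (filter (\<lambda>g. w \<in> g) gs)"
        unfolding cnt_def Ys_def filter_map length_map
        by (rule arg_cong[where f=length], rule filter_cong) (use wx in auto)
      then show ?thesis using gs(2) by simp
    qed
    have cntZ: "cnt {x, w} Zs = 0" for w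
      using Zs(1) insert.hyps(3) by (auto simp: cnt_def filter_empty_conv)
    show "\<exists>Xs. (\<forall>X\<in>set Xs. X \<subseteq> insert x F \<and> card X \<le> p) \<and>
     (\<forall>e\<in>E. e \<subseteq> insert x F \<longrightarrow> (odd (cnt e Xs) \<longleftrightarrow> T e)) \<and>
     (p - 1) * length Xs \<le> card {e\<in>E. e \<subseteq> insert x F} + (p - 2) * (card (insert x F) - 1)"
    proof (intro exI[of _ "Ys @ Zs"] conjI ballI impI allI)
      fix X assume "X \<in> set (Ys @ Zs)"
      then have "X \<in> set Ys \<or> X \<in> set Zs" by simp
      then have "X \<subseteq> insert x F \<and> card X \<le> p"
      proof
        assume "X \<in> set Ys"
        then obtain g where g: "g \<in> set gs" "X = insert x g" unfolding Ys_def by auto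
        have "finite g" using g gs(1) finB finite_subset by blast
        then have "card X \<le> card g + 1" using g by (simp add: card_insert_if)
        moreover have "card g \<le> p - 1" "g \<subseteq> B" using g(1) gs(1) by auto
        moreover have "B \<subseteq> F" unfolding B_def by blast
        ultimately show ?thesis using g(2) assms(3) by auto
      next
        assume "X \<in> set Zs" then show ?thesis using Zs(1) by auto
      qed
      then show "X \<subseteq> insert x F" "card X \<le> p" by auto
    next
      fix e assume e: "e \<in> E" "e \<subseteq> insert x F"
      show "odd (cnt e (Ys @ Zs)) \<longleftrightarrow> T e"
      proof (cases "e \<subseteq> F")
        case True
        then have "odd (cnt e Zs) = T' e" using Zs(2) e(1) by blast
        then show ?thesis unfolding cntapp T'_def by (cases "T e") simp_all
      next
        case False
        from E e(1) obtain u v where uv: "e = {u, v}" "u \<noteq> v" by blast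
        have "x \<in> e" using e(2) False by blast
        then have "u = x \<or> v = x" using uv by auto
        then obtain w where w: "w \<in> F" "e = {x, w}"
        proof
          assume "u = x" then show thesis using that[of v] uv e(2) by simp
        next
          assume "v = x" then show thesis using that[of u] uv e(2) by (simp add: insert_commute)
        qed
        show ?thesis using cntapp[of e] cntY[OF w(1)] cntZ[of w] w e B_def by auto
      qed
    next
      have fin: "finite {e\<in>E. e \<subseteq> insert x F}"
        by (rule finite_subset[of _ "Pow (insert x F)"]) (use insert.hyps(1) in auto)
      have disj: "{e\<in>E. e \<subseteq> F} \<inter> (\<lambda>u. {x, u}) ` B = {}" using insert.hyps(3) by auto
      have sub: "{e\<in>E. e \<subseteq> F} \<union> (\<lambda>u. {x, u}) ` B \<subseteq> {e\<in>E. e \<subseteq> insert x F}"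
        using B_def by auto
      have inj: "inj_on (\<lambda>u. {x, u}) B"
        by (rule inj_onI) (use insert.hyps(3) B_def in \<open>auto simp: doubleton_eq_iff\<close>)
      have "card {e\<in>E. e \<subseteq> F} + card B = card ({e\<in>E. e \<subseteq> F} \<union> (\<lambda>u. {x, u}) ` B)"
        using card_Un_disjoint[OF finite_subset[OF _ fin] finite_subset[OF _ fin] disj] sub
          card_image[OF inj] by auto
      also have "\<dots> \<le> card {e\<in>E. e \<subseteq> insert x F}" using card_mono[OF fin sub] .
      finally have cE: "card {e\<in>E. e \<subseteq> F} + card B \<le> card {e\<in>E. e \<subseteq> insert x F}" .
      have "card F \<ge> 1" using insert.hyps by (simp add: Suc_leI card_gt_0_iff)
      then have cF: "card (insert x F) - 1 = (card F - 1) + 1"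
        using insert.hyps by simp
      have dist: "(p - 2) * ((card F - 1) + 1) = (p - 2) * (card F - 1) + (p - 2)" by simp
      have pp: "card B + (p - 1) - 1 = card B + (p - 2)" using assms(3) by simp
      have "(p - 1) * length (Ys @ Zs) = (p - 1) * length gs + (p - 1) * length Zs"
        by (simp add: Ys_def add_mult_distrib2)
      also have "\<dots> \<le> card B + (p - 2) + card {e\<in>E. e \<subseteq> F} + (p - 2) * (card F - 1)"
        using gs(3) Zs(3) pp by linarith
      also have "\<dots> \<le> card {e\<in>E. e \<subseteq> insert x F} + (p - 2) * (card (insert x F) - 1)"
        unfolding cF dist using cE by linarith
      finally show "(p - 1) * length (Ys @ Zs) \<le> card {e\<in>E. e \<subseteq> insert x F} + (p - 2) * (card (insert x F) - 1)" .
    qed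
  qed
qed

lemma orient_E: "orientation V E D \<Longrightarrow> (a, b) \<in> D \<Longrightarrow> {a, b} \<in> E"
  unfolding orientation_def by blast

lemma orient_flip: "orientation V E D \<Longrightarrow> {a, b} \<in> E \<Longrightarrow> a \<noteq> b \<Longrightarrow> (a, b) \<in> D \<longleftrightarrow> (b, a) \<notin> D"
  unfolding orientation_def by blast

lemma dist_bound:
  assumes p: "2 \<le> p" and G: "simple_graph V E" and ne: "V \<noteq> {}"
    and D1: "orientation V E D1" and D2: "orientation V E D2"
  shows "(p - 1) * inv_dist p V D1 D2 \<le> card E + (p - 2) * (card V - 1)"
proof -
  have finV: "finite V" using G unfolding simple_graph_def by blast
  have Ed: "\<forall>e\<in>E. \<exists>u v. e = {u, v} \<and> u \<noteq> v \<and> u \<in> V \<and> v \<in> V" using G unfolding simple_graph_def by blast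
  then have E2: "\<forall>e\<in>E. \<exists>u v. e = {u, v} \<and> u \<noteq> v" by blast
  have "e \<subseteq> V" if "e \<in> E" for e
    using bspec[OF Ed that] by auto
  then have EV: "{e\<in>E. e \<subseteq> V} = E" by auto
  define T where "T e = (\<exists>a b. e = {a, b} \<and> (a, b) \<in> D1 \<and> (b, a) \<in> D2)" for e
  obtain Xs where Xsall: "(\<forall>X\<in>set Xs. X \<subseteq> V \<and> card X \<le> p) \<and>
     (\<forall>e\<in>E. e \<subseteq> V \<longrightarrow> (odd (cnt e Xs) \<longleftrightarrow> T e)) \<and>
     (p - 1) * length Xs \<le> card {e\<in>E. e \<subseteq> V} + (p - 2) * (card V - 1)"
    using spec[OF core[OF finV ne p E2], of T] by (elim exE)
  note Xs = Xsall[THEN conjunct1] Xsall[THEN conjunct2, THEN conjunct1] Xsall[THEN conjunct2, THEN conjunct2]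
  have fold: "foldl invert D1 Xs = D2"
  proof (intro set_eqI)
    fix z :: "'a \<times> 'a"
    obtain a b where z: "z = (a, b)" by (cases z) simp
    show "z \<in> foldl invert D1 Xs \<longleftrightarrow> z \<in> D2"
    proof (cases "{a, b} \<in> E")
      case True
      have ab: "a \<noteq> b" "{a, b} \<subseteq> V" using bspec[OF Ed True] by (auto simp: doubleton_eq_iff)
      have c: "odd (cnt {a, b} Xs) \<longleftrightarrow> T {a, b}" using Xs(2) True ab(2) by blast
      have Tab: "T {a, b} \<longleftrightarrow> ((a, b) \<in> D1 \<and> (b, a) \<in> D2) \<or> ((b, a) \<in> D1 \<and> (a, b) \<in> D2)"
        unfolding T_def by (auto simp: doubleton_eq_iff)
      have f1: "(a, b) \<in> D1 \<longleftrightarrow> (b, a) \<notin> D1" using orient_flip[OF D1 True ab(1)] .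
      have f2: "(a, b) \<in> D2 \<longleftrightarrow> (b, a) \<notin> D2" using orient_flip[OF D2 True ab(1)] .
      show ?thesis unfolding z foldl_invert_mem using c Tab f1 f2 by auto
    next
      case False
      have n2: "(a, b) \<notin> D2" using False orient_E[OF D2] by blast
      have n1: "(a, b) \<notin> D1" using False orient_E[OF D1] by blast
      have n1': "(b, a) \<notin> D1" using False orient_E[OF D1, of b a] by (auto simp: insert_commute)
      show ?thesis unfolding z foldl_invert_mem using n1 n1' n2 by auto
    qed
  qed
  have "inv_dist p V D1 D2 \<le> length Xs"
    unfolding inv_dist_def
    by (rule Least_le) (use Xs(1) fold in \<open>auto simp: le_p_inversion_set_def\<close>)
  then have "(p - 1) * inv_dist p V D1 D2 \<le> (p - 1) * length Xs" by (rule mult_le_mono2)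
  then show ?thesis using order_trans[OF _ Xs(3)[unfolded EV]] by blast
qed

lemma real_bound:
  fixes p k m n :: nat
  assumes "p > 2" "n \<ge> 1" "(p - 1) * k \<le> m + (p - 2) * (n - 1)"
  shows "real k \<le> real m / (real p - 1) + (real p - 2) / (real p - 1) * (real n - 1)"
proof -
  have "real ((p - 1) * k) \<le> real (m + (p - 2) * (n - 1))" using assms(3) by (simp only: of_nat_le_iff)
  then have h: "(real p - 1) * real k \<le> real m + (real p - 2) * (real n - 1)"
    using assms(1,2) by (simp add: of_nat_diff)
  have pos: "real p - 1 > 0" using assms(1) by simp
  have eq: "real m / (real p - 1) + (real p - 2) / (real p - 1) * (real n - 1)
      = (real m + (real p - 2) * (real n - 1)) / (real p - 1)"
    by (simp add: add_divide_distrib)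
  show ?thesis unfolding eq using h pos by (simp add: pos_le_divide_eq mult.commute)
qed

lemma orientation_exists:
  assumes G: "simple_graph V E"
  shows "\<exists>D. orientation V E D"
proof -
  have finV: "finite V" using G unfolding simple_graph_def by blast
  obtain f :: "'a \<Rightarrow> nat" and n where f: "f ` V = {i. i < n}" "inj_on f V"
    using finite_imp_inj_to_nat_seg[OF finV] by blast
  define D where "D = {(u, v). {u, v} \<in> E \<and> f u < f v}"
  have "orientation V E D"
    unfolding orientation_def
  proof (intro conjI allI impI)
    show "\<forall>(u, v)\<in>D. {u, v} \<in> E" unfolding D_def by auto
  next
    fix u v assume uv: "{u, v} \<in> E \<and> u \<noteq> v"
    have "u \<in> V" "v \<in> V" using bspec[OF G[unfolded simple_graph_def, THEN conjunct2] uv[THEN conjunct1]]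
      by (auto simp: doubleton_eq_iff)
    then have "f u \<noteq> f v" using uv f(2) by (auto dest: inj_onD)
    then show "(u, v) \<in> D \<longleftrightarrow> (v, u) \<notin> D" unfolding D_def using uv by (auto simp: insert_commute)
  qed
  then show ?thesis by blast
qed

theorem mainTheorem3:
  fixes p :: nat and V :: "'a set" and E :: "'a set set"
  assumes "p > 2" and "simple_graph V E" and "V \<noteq> {}"
  shows "real (inv_diam p V E)
           \<le> real (card E) / (real p - 1) + (real p - 2) / (real p - 1) * (real (card V) - 1)"
proof -
  define S where "S = {inv_dist p V D1 D2 | D1 D2. orientation V E D1 \<and> orientation V E D2}"
  have finV: "finite V" using assms(2) unfolding simple_graph_def by blast
  have Ed: "\<forall>e\<in>E. \<exists>u v. e = {u, v} \<and> u \<noteq> v \<and> u \<in> V \<and> v \<in> V"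
    using assms(2) unfolding simple_graph_def by blast
  have sub: "D \<subseteq> V \<times> V" if "orientation V E D" for D
  proof
    fix z assume "z \<in> D"
    obtain a b where z: "z = (a, b)" by (cases z) simp
    have "{a, b} \<in> E" using orient_E[OF that] \<open>z \<in> D\<close> z by simp
    then have "a \<in> V \<and> b \<in> V" using bspec[OF Ed \<open>{a, b} \<in> E\<close>] by (auto simp: doubleton_eq_iff)
    then show "z \<in> V \<times> V" using z by simp
  qed
  have "S \<subseteq> (\<lambda>(D1, D2). inv_dist p V D1 D2) ` (Pow (V \<times> V) \<times> Pow (V \<times> V))"
    unfolding S_def using sub by fastforce
  then have finS: "finite S" by (rule finite_subset) (use finV in simp)
  obtain D0 where "orientation V E D0" using orientation_exists[OF assms(2)] by blast
  then have neS: "S \<noteq> {}" unfolding S_def by blast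
  have "Max S \<in> S" using Max_in[OF finS neS] .
  then obtain D1 D2 where D: "orientation V E D1" "orientation V E D2" "Max S = inv_dist p V D1 D2"
    unfolding S_def by blast
  have "(p - 1) * inv_dist p V D1 D2 \<le> card E + (p - 2) * (card V - 1)"
    using dist_bound[OF _ assms(2) assms(3) D(1) D(2)] assms(1) by simp
  moreover have "card V \<ge> 1" using finV assms(3) by (simp add: Suc_leI card_gt_0_iff)
  ultimately show ?thesis unfolding inv_diam_def S_def[symmetric] D(3)
    using real_bound[OF assms(1)] by blast
qed

end
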